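(* Consider the parameterized unitary channel $\mathcal{E}_\theta(A) = U(\theta)^\dagger A U(\theta)$ with a real parameter $\theta \in \mathbb{R}$, where $U(\theta) = \prod_{k=1}^K V_k e^{-i\theta H_k}$, $\{H_k\}_{k=1}^K$ is a set of $K$ Hermitian operators (Hamiltonians, not necessarily commuting) and $\{V_k\}_{k=1}^K$ are unitaries that do not depend on $\theta$. Define the unitary channels $\widetilde{\mathcal{U}}_{\theta,k}(A) := e^{i\theta H_k} V_k^\dagger A V_k e^{-i\theta H_k}$, and let $\widetilde{\mathcal{U}}_{\phi,k}^{(a_k)}(A)$ denote the $a_k$-th order derivative of $\widetilde{\mathcal{U}}_{\theta,k}(A)$ with respect to $\theta$ evaluated at $\theta=\phi$. Then the $p$-th order derivative of $\mathcal{E}_\theta(A)$ with respect to $\theta$ evaluated at $\phi\in\mathbb{R}$ is $$\mathcal{E}_\phi^{(p)}(A) := \frac{d^p}{d\theta^p}\mathcal{E}_\theta(A)\Big|_{\theta=\phi} = \sum_{\substack{\vec{a}=(a_1,\dots,a_K)\\ a_1+\dots+a_K=p}} \binom{p}{\vec{a}}\, \widetilde{\mathcal{U}}_{\phi,K}^{(a_K)}\circ \widetilde{\mathcal{U}}_{\phi,K-1}^{(a_{K-1})}\circ\dots\circ \widetilde{\mathcal{U}}_{\phi,1}^{(a_1)}(A),$$ where the sum is over nonnegative integers $a_k$ and $\binom{p}{\vec{a}} = \frac{p!}{a_1!\cdots a_K!}$ is the multinomial coefficient. Moreover, for any bounded operator $A$, $$\left\|\mathcal{E}_\phi^{(p)}(A)\right\|_\infty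 \le \left(\sum_{k=1}^K 2\,\omega^{(\max)}(H_k)\right)^p \|A\|_\infty,$$ where $\omega^{(\max)}(H) := |\lambda_{\max}(H)-\lambda_{\min}(H)|$ is the difference between the largest and smallest eigenvalues of $H$.
   Context: $\|\cdot\|_\infty$ denotes the operator (spectral) norm. The channel $\mathcal{E}_\theta$ equals the composition $\widetilde{\mathcal{U}}_{\theta,K}\circ\cdots\circ\widetilde{\mathcal{U}}_{\theta,1}$. *)

theory Defs
  imports "HOL-Analysis.Analysis"
begin

type_synonym 'n cmat = "complex^'n^'n"

definition adj :: "'n::finite cmat \<Rightarrow> 'n cmat" where
  "adj A = (\<chi> i j. cnj (A $ j $ i))"

definition hermitian :: "'n::finite cmat \<Rightarrow> bool" where
  "hermitian H \<longleftrightarrow> adj H = H"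

definition unitary :: "'n::finite cmat \<Rightarrow> bool" where
  "unitary V \<longleftrightarrow> adj V ** V = mat 1 \<and> V ** adj V = mat 1"

definition cscale :: "complex \<Rightarrow> 'n::finite cmat \<Rightarrow> 'n cmat" where
  "cscale c A = (\<chi> i j. c * A $ i $ j)"

fun mpow :: "'n::finite cmat \<Rightarrow> nat \<Rightarrow> 'n cmat" where
  "mpow A 0 = mat 1"
| "mpow A (Suc k) = A ** mpow A k"

definition mexp :: "'n::finite cmat \<Rightarrow> 'n cmat" where
  "mexp X = (\<Sum>k. (1 / fact k) *\<^sub>R mpow X k)"

text \<open>Operator (spectral) norm: the operator norm w.r.t. the Euclidean norm on complex^n.\<close>
definition opnorm :: "'n::finite cmat \<Rightarrow> real" where
  "opnorm A = onorm (\<lambda>x. A *v x)"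

definition eigenvalues :: "'n::finite cmat \<Rightarrow> complex set" where
  "eigenvalues H = {c. \<exists>v. v \<noteq> 0 \<and> H *v v = c *s v}"

text \<open>omega_max(H) = |lambda_max(H) - lambda_min(H)| (eigenvalues of a Hermitian H are real).\<close>
definition omega_max :: "'n::finite cmat \<Rightarrow> real" where
  "omega_max H = \<bar>Max (Re ` eigenvalues H) - Min (Re ` eigenvalues H)\<bar>"

fun nth_deriv :: "nat \<Rightarrow> (real \<Rightarrow> 'a::real_normed_vector) \<Rightarrow> real \<Rightarrow> 'a" where
  "nth_deriv 0 f = f"
| "nth_deriv (Suc n) f = (\<lambda>t. vector_derivative (nth_deriv n f) (at t))"

text \<open>U(theta) = prod_{k=1}^K V_k e^{-i theta H_k}, with k = 1 the leftmost factor.\<close>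
definition Uparam :: "nat \<Rightarrow> (nat \<Rightarrow> 'n::finite cmat) \<Rightarrow> (nat \<Rightarrow> 'n cmat) \<Rightarrow> real \<Rightarrow> 'n cmat" where
  "Uparam K V H \<theta> =
     foldl (\<lambda>M k. M ** (V k ** mexp (cscale (- \<i> * complex_of_real \<theta>) (H k)))) (mat 1) [1..<K+1]"

definition Echan :: "nat \<Rightarrow> (nat \<Rightarrow> 'n::finite cmat) \<Rightarrow> (nat \<Rightarrow> 'n cmat) \<Rightarrow> real \<Rightarrow> 'n cmat \<Rightarrow> 'n cmat" where
  "Echan K V H \<theta> A = adj (Uparam K V H \<theta>) ** A ** Uparam K V H \<theta>"

definition Utilde :: "(nat \<Rightarrow> 'n::finite cmat) \<Rightarrow> (nat \<Rightarrow> 'n cmat) \<Rightarrow> real \<Rightarrow> nat \<Rightarrow> 'n cmat \<Rightarrow> 'n cmat" where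
  "Utilde V H \<theta> k A =
     mexp (cscale (\<i> * complex_of_real \<theta>) (H k)) ** adj (V k) ** A ** V k
       ** mexp (cscale (- \<i> * complex_of_real \<theta>) (H k))"

definition Utilde_deriv :: "(nat \<Rightarrow> 'n::finite cmat) \<Rightarrow> (nat \<Rightarrow> 'n cmat) \<Rightarrow> nat \<Rightarrow> real \<Rightarrow> nat \<Rightarrow> 'n cmat \<Rightarrow> 'n cmat" where
  "Utilde_deriv V H a \<phi> k A = nth_deriv a (\<lambda>\<theta>. Utilde V H \<theta> k A) \<phi>"

definition comp_derivs :: "nat \<Rightarrow> (nat \<Rightarrow> 'n::finite cmat) \<Rightarrow> (nat \<Rightarrow> 'n cmat) \<Rightarrow> (nat \<Rightarrow> nat) \<Rightarrow> real \<Rightarrow> 'n cmat \<Rightarrow> 'n cmat" where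
  "comp_derivs K V H a \<phi> A = foldl (\<lambda>B k. Utilde_deriv V H (a k) \<phi> k B) A [1..<K+1]"

definition multi_indices :: "nat \<Rightarrow> nat \<Rightarrow> (nat \<Rightarrow> nat) set" where
  "multi_indices K p = {a. (\<forall>k. k \<notin> {1..K} \<longrightarrow> a k = 0) \<and> (\<Sum>k=1..K. a k) = p}"

definition multinom :: "nat \<Rightarrow> nat \<Rightarrow> (nat \<Rightarrow> nat) \<Rightarrow> real" where
  "multinom K p a = fact p / (\<Prod>k=1..K. fact (a k))"

end

theory Submission
  imports Defs
begin


lemma mm_scaleR_left: "((r::real) *\<^sub>R A) ** (B::complex^'n::finite^'n) = r *\<^sub>R (A ** B)"
  by (vector matrix_matrix_mult_def sum_distrib_left scaleR_conv_of_real mult.assoc)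

lemma mm_scaleR_right: "(A::complex^'n::finite^'n) ** ((r::real) *\<^sub>R B) = r *\<^sub>R (A ** B)"
  by (vector matrix_matrix_mult_def sum_distrib_left scaleR_conv_of_real mult.assoc mult.left_commute)

lemma mm_add_right: "((A::complex^'n::finite^'n) + B) ** C = A ** C + B ** C"
  by (vector matrix_matrix_mult_def sum.distrib[symmetric] field_simps)

lemma mm_diff_right: "((A::complex^'n::finite^'n) - B) ** C = A ** C - B ** C"
  by (vector matrix_matrix_mult_def sum_subtractf[symmetric] field_simps)

lemma mm_diff_left: "(C::complex^'n::finite^'n) ** (A - B) = C ** A - C ** B"
  by (vector matrix_matrix_mult_def sum_subtractf[symmetric] field_simps)

lemma mm_minus_left: "(- A::complex^'n::finite^'n) ** B = - (A ** B)"
  by (vector matrix_matrix_mult_def sum_negf[symmetric])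

lemma mm_minus_right: "(A::complex^'n::finite^'n) ** (- B) = - (A ** B)"
  by (vector matrix_matrix_mult_def sum_negf[symmetric])

lemma mm_sum_left: "(\<Sum>i\<in>I. f i) ** (B::complex^'n::finite^'n) = (\<Sum>i\<in>I. f i ** B)" for f :: "_ \<Rightarrow> complex^'n^'n"
  by (induction I rule: infinite_finite_induct) (auto simp: mm_add_right)

lemma mm_sum_right: "(B::complex^'n::finite^'n) ** (\<Sum>i\<in>I. f i) = (\<Sum>i\<in>I. B ** f i)" for f :: "_ \<Rightarrow> complex^'n^'n"
  by (induction I rule: infinite_finite_induct) (auto simp: matrix_add_ldistrib)

lemma bilinear_mm: "bilinear (\<lambda>(A::complex^'n::finite^'n) (B::complex^'n^'n). A ** B)"
  unfolding bilinear_def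
  by (auto intro!: linearI simp: mm_add_right matrix_add_ldistrib mm_scaleR_left mm_scaleR_right)

lemma bounded_bilinear_mm: "bounded_bilinear (\<lambda>(A::complex^'n::finite^'n) (B::complex^'n^'n). A ** B)"
  using bilinear_mm bilinear_conv_bounded_bilinear by blast

lemma bounded_linear_mm_left: "bounded_linear (\<lambda>B::complex^'n^'n. (A::complex^'n::finite^'n) ** B)"
  using bounded_bilinear.bounded_linear_right[OF bounded_bilinear_mm] .

lemma bounded_linear_mm_right: "bounded_linear (\<lambda>A::complex^'n^'n. (A::complex^'n::finite^'n) ** (B::complex^'n^'n))"
  using bounded_bilinear.bounded_linear_left[OF bounded_bilinear_mm] .

lemma adj_adj[simp]: "adj (adj A) = (A::complex^'n::finite^'n)"
  by (simp add: adj_def vec_eq_iff)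

lemma adj_mult: "adj ((A::complex^'n::finite^'n) ** B) = adj B ** adj A"
  by (simp add: adj_def vec_eq_iff matrix_matrix_mult_def mult.commute)

lemma adj_add: "adj ((A::complex^'n::finite^'n) + B) = adj A + adj B"
  by (simp add: adj_def vec_eq_iff)

lemma adj_scaleR: "adj ((r::real) *\<^sub>R (A::complex^'n::finite^'n)) = r *\<^sub>R adj A"
  by (simp add: adj_def vec_eq_iff complex_cnj_scaleR)

lemma adj_mat1[simp]: "adj (mat 1 :: complex^'n::finite^'n) = mat 1"
  by (simp add: adj_def vec_eq_iff mat_def)

lemma adj_cscale: "adj (cscale c (A::complex^'n::finite^'n)) = cscale (cnj c) (adj A)"
  by (simp add: adj_def vec_eq_iff cscale_def)

lemma linear_adj: "linear (adj :: complex^'n::finite^'n \<Rightarrow> _)"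
  by (auto intro!: linearI simp: adj_add adj_scaleR)

lemma bounded_linear_adj: "bounded_linear (adj :: complex^'n::finite^'n \<Rightarrow> _)"
  using linear_adj linear_conv_bounded_linear by blast

lemma mpow_Suc_right: "mpow X (Suc k) = mpow X k ** (X::complex^'n::finite^'n)"
  by (induction k) (auto simp: matrix_mul_assoc)

lemma mpow_commute: "X ** mpow X k = mpow X k ** (X::complex^'n::finite^'n)"
  using mpow_Suc_right[of X k] by simp

lemma mpow_scaleR: "mpow ((r::real) *\<^sub>R X) k = (r ^ k) *\<^sub>R mpow (X::complex^'n::finite^'n) k"
  by (induction k) (auto simp: mm_scaleR_left mm_scaleR_right)

lemma adj_mpow: "adj (mpow X k) = mpow (adj X) (k::nat)" for X :: "complex^'n::finite^'n"
  by (induction k) (auto simp: adj_mult mpow_Suc_right mpow_commute)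

lemma mpow_norm_bound: "\<exists>B r. B \<ge> 0 \<and> r \<ge> 0 \<and> (\<forall>k. norm (mpow (X::complex^'n::finite^'n) k) \<le> B * r ^ k)"
proof -
  have "\<exists>K>0. \<forall>(a::complex^'n^'n) (b::complex^'n^'n). norm (a ** b) \<le> norm a * norm b * K"
    by (rule bounded_bilinear.pos_bounded[OF bounded_bilinear_mm])
  then obtain Kb where Kb0: "\<forall>(a::complex^'n^'n) (b::complex^'n^'n). norm (a ** b) \<le> norm a * norm b * Kb" and Kb2: "Kb > 0"
    by blast
  note Kb = Kb0[rule_format] Kb2
  have "norm (mpow X k) \<le> norm (mat 1 :: complex^'n^'n) * (Kb * norm X) ^ k" for k
  proof (induction k)
    case (Suc k)
    have "norm (mpow X (Suc k)) \<le> norm X * norm (mpow X k) * Kb" using Kb(1) by simp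
    also have "\<dots> \<le> norm X * (norm (mat 1 :: complex^'n^'n) * (Kb * norm X) ^ k) * Kb"
      using Suc Kb(2) by (intro mult_right_mono mult_left_mono) auto
    finally show ?case by (simp add: algebra_simps)
  qed simp
  then show ?thesis using Kb(2) by (intro exI[of _ "norm (mat 1 :: complex^'n^'n)"] exI[of _ "Kb * norm X"]) auto
qed



lemma vser_deriv:
  fixes f :: "nat \<Rightarrow> real \<Rightarrow> 'a::banach" and d :: "nat \<Rightarrow> real \<Rightarrow> 'a"
  assumes deriv: "\<And>n x. (f n has_vector_derivative d n x) (at x)"
    and ul: "uniformly_convergent_on (ball 0 R) (\<lambda>n x. \<Sum>i<n. d i x)"
    and sm: "summable (\<lambda>n. f n x)"
    and xR: "\<bar>x\<bar> < R"
  shows "((\<lambda>x. \<Sum>n. f n x) has_vector_derivative (\<Sum>n. d n x)) (at x)"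
proof -
  define S where "S = ball (0::real) R"
  have xS: "x \<in> S" using xR by (simp add: S_def)
  define G where "G y = (\<Sum>i. d i y)" for y
  have Geq: "G = (\<lambda>y. lim (\<lambda>n. \<Sum>i<n. d i y))" by (simp add: G_def suminf_eq_lim fun_eq_iff)
  from ul have U: "uniform_limit S (\<lambda>n y. \<Sum>i<n. d i y) G sequentially"
    unfolding Geq by (simp add: S_def uniformly_convergent_uniform_limit_iff)
  have "\<exists>g. \<forall>y\<in>S. (\<lambda>n. f n y) sums (g y) \<and> (g has_derivative (\<lambda>h. h *\<^sub>R G y)) (at y within S)"
  proof (rule has_derivative_series[where f' = "\<lambda>n y h. h *\<^sub>R d n y"])
    show "convex S" by (simp add: S_def)
    show "(f n has_derivative (\<lambda>h. h *\<^sub>R d n y)) (at y within S)" if "y \<in> S" for n y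
      using deriv[of n y] has_derivative_at_withinI unfolding has_vector_derivative_def by blast
    show "\<forall>\<^sub>F n in sequentially. \<forall>y\<in>S. \<forall>h. norm ((\<Sum>i<n. h *\<^sub>R d i y) - h *\<^sub>R G y) \<le> e * norm h"
      if "e > 0" for e
    proof -
      from U that obtain N where N: "\<And>n y. n \<ge> N \<Longrightarrow> y \<in> S \<Longrightarrow> norm ((\<Sum>i<n. d i y) - G y) < e"
        unfolding uniform_limit_iff eventually_at_top_linorder dist_norm by blast
      have "norm ((\<Sum>i<n. h *\<^sub>R d i y) - h *\<^sub>R G y) \<le> e * norm h" if "n \<ge> N" "y \<in> S" for n y h
      proof -
        have "norm ((\<Sum>i<n. h *\<^sub>R d i y) - h *\<^sub>R G y) = \<bar>h\<bar> * norm ((\<Sum>i<n. d i y) - G y)"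
          by (simp add: scaleR_sum_right[symmetric] scaleR_diff_right[symmetric])
        also have "\<dots> \<le> \<bar>h\<bar> * e" using N[OF that] by (intro mult_left_mono) auto
        finally show ?thesis by (simp add: mult.commute)
      qed
      then show ?thesis unfolding eventually_sequentially by blast
    qed
    show "x \<in> S" by (rule xS)
    show "(\<lambda>n. f n x) sums (\<Sum>n. f n x)" using sm by (simp add: summable_sums)
  qed
  then obtain g where g: "\<And>y. y \<in> S \<Longrightarrow> (\<lambda>n. f n y) sums (g y)"
    "\<And>y. y \<in> S \<Longrightarrow> (g has_derivative (\<lambda>h. h *\<^sub>R G y)) (at y within S)" by blast
  have "(g has_derivative (\<lambda>h. h *\<^sub>R G x)) (at x)"
    using g(2)[OF xS] by (simp add: S_def at_within_open[OF xS[unfolded S_def]])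
  then have "((\<lambda>y. \<Sum>n. f n y) has_derivative (\<lambda>h. h *\<^sub>R G x)) (at x)"
    by (rule has_derivative_transform_within_open[where s = S]) (use xR g(1) in \<open>auto simp: S_def sums_iff\<close>)
  then show ?thesis by (simp add: has_vector_derivative_def G_def)
qed

lemma exp_ser_summable:
  fixes c :: "nat \<Rightarrow> 'a::banach"
  assumes cb: "\<And>k. norm (c k) \<le> B * r ^ k" and B: "B \<ge> 0" and r: "r \<ge> 0"
  shows "summable (\<lambda>k. (x ^ k / fact k) *\<^sub>R c k)"
proof (rule summable_comparison_test[where g = "\<lambda>k. B * (inverse (fact k) * (\<bar>x\<bar> * r) ^ k)"])
  show "\<exists>N. \<forall>n\<ge>N. norm ((x ^ n / fact n) *\<^sub>R c n) \<le> B * (inverse (fact n) * (\<bar>x\<bar> * r) ^ n)"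
  proof (intro exI allI impI)
    fix n :: nat
    have "norm ((x ^ n / fact n) *\<^sub>R c n) = (\<bar>x\<bar> ^ n / fact n) * norm (c n)"
      by (simp add: power_abs)
    also have "\<dots> \<le> (\<bar>x\<bar> ^ n / fact n) * (B * r ^ n)" by (intro mult_left_mono cb) auto
    also have "\<dots> = B * (inverse (fact n) * (\<bar>x\<bar> * r) ^ n)" by (simp add: power_mult_distrib field_simps)
    finally show "norm ((x ^ n / fact n) *\<^sub>R c n) \<le> B * (inverse (fact n) * (\<bar>x\<bar> * r) ^ n)" .
  qed
  show "summable (\<lambda>k. B * (inverse (fact k) * (\<bar>x\<bar> * r) ^ k))"
    by (intro summable_mult summable_exp)
qed

lemma exp_ser_deriv:
  fixes c :: "nat \<Rightarrow> 'a::banach"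
  assumes cb: "\<And>k. norm (c k) \<le> B * r ^ k" and B: "B \<ge> 0" and r: "r \<ge> 0"
  shows "summable (\<lambda>k. (t ^ k / fact k) *\<^sub>R c k)"
    and "((\<lambda>t. \<Sum>k. (t ^ k / fact k) *\<^sub>R c k) has_vector_derivative (\<Sum>k. (t ^ k / fact k) *\<^sub>R c (Suc k))) (at t)"
proof -
  have sm: "summable (\<lambda>k. (x ^ k / fact k) *\<^sub>R c k)" for x :: real
    by (rule exp_ser_summable[OF cb B r])
  then show "summable (\<lambda>k. (t ^ k / fact k) *\<^sub>R c k)" .
  define d where "d n x = (of_nat n * x ^ (n - 1) / fact n) *\<^sub>R c n" for n and x :: real
  have der: "((\<lambda>x. (x ^ n / fact n) *\<^sub>R c n) has_vector_derivative d n x) (at x)" for n x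
    unfolding d_def
    by (auto intro!: derivative_eq_intros simp: divide_simps)
  define R where "R = \<bar>t\<bar> + 1"
  have dsuc: "d (Suc m) x = (x ^ m / fact m) *\<^sub>R c (Suc m)" for m x
    by (simp add: d_def divide_simps)
  have ul: "uniformly_convergent_on (ball 0 R) (\<lambda>n x. \<Sum>i<n. d i x)"
  proof (rule Weierstrass_m_test'[where M = "\<lambda>n. (\<lambda>m. B * r * (inverse (fact m) * (R * r) ^ m)) (n - 1)"])
    fix n x assume x: "x \<in> ball (0::real) R"
    show "norm (d n x) \<le> (\<lambda>m. B * r * (inverse (fact m) * (R * r) ^ m)) (n - 1)"
    proof (cases n)
      case 0 then show ?thesis using B r by (simp add: d_def)
    next
      case (Suc m)
      have "norm (d n x) = (\<bar>x\<bar> ^ m / fact m) * norm (c (Suc m))"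
        using Suc by (simp add: dsuc power_abs)
      also have "\<dots> \<le> (R ^ m / fact m) * (B * r ^ Suc m)"
        using x by (intro mult_mono cb divide_right_mono power_mono) auto
      also have "\<dots> = B * r * (inverse (fact m) * (R * r) ^ m)" by (simp add: power_mult_distrib field_simps)
      finally show ?thesis using Suc by simp
    qed
  next
    have "summable (\<lambda>m. B * r * (inverse (fact m) * (R * r) ^ m))"
      by (intro summable_mult summable_exp)
    then show "summable (\<lambda>n. (\<lambda>m. B * r * (inverse (fact m) * (R * r) ^ m)) (n - 1))"
      by (subst summable_Suc_iff[symmetric]) simp
  qed
  have "((\<lambda>x. \<Sum>n. (x ^ n / fact n) *\<^sub>R c n) has_vector_derivative (\<Sum>n. d n t)) (at t)"
    by (rule vser_deriv[OF der ul sm]) (simp add: R_def)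
  moreover have "(\<Sum>n. d n t) = (\<Sum>k. (t ^ k / fact k) *\<^sub>R c (Suc k))"
  proof -
    have "summable (\<lambda>m. (t ^ m / fact m) *\<^sub>R c (Suc m))"
      by (rule exp_ser_summable[where B = "B * r" and r = r]) (use cb[of "Suc _"] B r in \<open>auto simp: mult.assoc\<close>)
    then have "summable (\<lambda>n. d n t)" by (subst summable_Suc_iff[symmetric]) (simp add: dsuc)
    then show ?thesis using suminf_split_head[of "\<lambda>n. d n t"] by (simp add: dsuc d_def)
  qed
  ultimately show "((\<lambda>t. \<Sum>k. (t ^ k / fact k) *\<^sub>R c k) has_vector_derivative (\<Sum>k. (t ^ k / fact k) *\<^sub>R c (Suc k))) (at t)"
    by simp
qed



type_synonym 'n cm = "complex^'n^'n"

lemma mexp_series: "mexp (t *\<^sub>R X) = (\<Sum>k. (t ^ k / fact k) *\<^sub>R mpow (X::complex^'n::finite^'n) k)"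
  by (simp add: mexp_def mpow_scaleR)

lemma mexp_ser_props:
  fixes X :: "complex^'n::finite^'n"
  shows "summable (\<lambda>k. (t ^ k / fact k) *\<^sub>R mpow X k)"
    and "((\<lambda>t. \<Sum>k. (t ^ k / fact k) *\<^sub>R mpow X k) has_vector_derivative (\<Sum>k. (t ^ k / fact k) *\<^sub>R mpow X (Suc k))) (at t)"
proof -
  obtain B r where Br: "B \<ge> 0" "r \<ge> 0" "\<And>k. norm (mpow X k) \<le> B * r ^ k"
    using mpow_norm_bound[of X] by blast
  show "summable (\<lambda>k. (t ^ k / fact k) *\<^sub>R mpow X k)"
    by (rule exp_ser_deriv(1)[OF Br(3) Br(1,2)])
  show "((\<lambda>t. \<Sum>k. (t ^ k / fact k) *\<^sub>R mpow X k) has_vector_derivative (\<Sum>k. (t ^ k / fact k) *\<^sub>R mpow X (Suc k))) (at t)"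
    by (rule exp_ser_deriv(2)[OF Br(3) Br(1,2)])
qed

lemma mexp_comm: "X ** mexp (t *\<^sub>R X) = mexp (t *\<^sub>R X) ** (X::complex^'n::finite^'n)"
proof -
  have "X ** mexp (t *\<^sub>R X) = (\<Sum>k. X ** ((t ^ k / fact k) *\<^sub>R mpow X k))"
    unfolding mexp_series by (rule bounded_linear.suminf[OF bounded_linear_mm_left mexp_ser_props(1)])
  also have "\<dots> = (\<Sum>k. ((t ^ k / fact k) *\<^sub>R mpow X k) ** X)"
    by (simp add: mm_scaleR_right mm_scaleR_left mpow_commute)
  also have "\<dots> = mexp (t *\<^sub>R X) ** X"
    unfolding mexp_series by (rule bounded_linear.suminf[OF bounded_linear_mm_right mexp_ser_props(1), symmetric])
  finally show ?thesis .
qed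

lemma mexp_deriv: "((\<lambda>t. mexp (t *\<^sub>R X)) has_vector_derivative X ** mexp (t *\<^sub>R (X::complex^'n::finite^'n))) (at t)"
proof -
  have "X ** mexp (t *\<^sub>R X) = (\<Sum>k. X ** ((t ^ k / fact k) *\<^sub>R mpow X k))"
    unfolding mexp_series by (rule bounded_linear.suminf[OF bounded_linear_mm_left mexp_ser_props(1)])
  also have "\<dots> = (\<Sum>k. (t ^ k / fact k) *\<^sub>R mpow X (Suc k))"
    by (simp add: mm_scaleR_right)
  finally show ?thesis unfolding mexp_series using mexp_ser_props(2) by simp
qed

lemma mexp_zero: "mexp (0 *\<^sub>R (X::complex^'n::finite^'n)) = mat 1"
proof -
  have "(\<lambda>k. ((0::real) ^ k / fact k) *\<^sub>R mpow X k) = (\<lambda>k. if k = 0 then mpow X k else 0)"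
    by (auto simp: fun_eq_iff)
  then have "(\<lambda>k. ((0::real) ^ k / fact k) *\<^sub>R mpow X k) sums mpow X 0"
    using sums_single[of 0 "mpow X"] by simp
  then show ?thesis unfolding mexp_series by (simp add: sums_iff)
qed

lemma mexp_zero': "mexp (0::complex^'n::finite^'n) = mat 1"
  using mexp_zero[of "0::complex^'n^'n"] by simp

lemma mexp_inv: "mexp (t *\<^sub>R X) ** mexp (t *\<^sub>R (- X)) = (mat 1 :: complex^'n::finite^'n)"
proof -
  define F where "F t = mexp (t *\<^sub>R X) ** mexp (t *\<^sub>R (- X))" for t
  have "(F has_derivative (\<lambda>h. 0)) (at s within UNIV)" for s
  proof -
    have "(F has_vector_derivative (mexp (s *\<^sub>R X) ** ((- X) ** mexp (s *\<^sub>R (- X))) + (X ** mexp (s *\<^sub>R X)) ** mexp (s *\<^sub>R (- X)))) (at s)"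
      unfolding F_def by (rule bounded_bilinear.has_vector_derivative[OF bounded_bilinear_mm mexp_deriv mexp_deriv])
    moreover have "mexp (s *\<^sub>R X) ** ((- X) ** mexp (s *\<^sub>R (- X))) + (X ** mexp (s *\<^sub>R X)) ** mexp (s *\<^sub>R (- X)) = 0"
      by (simp add: mexp_comm matrix_mul_assoc mm_minus_left mm_minus_right)
    ultimately show ?thesis by (simp add: has_vector_derivative_def)
  qed
  then obtain c where "\<forall>x\<in>UNIV. F x = c" using has_derivative_zero_constant[of UNIV F] by blast
  then have "F t = F 0" by simp
  then show ?thesis by (simp add: F_def mexp_zero')
qed

lemma adj_mexp: "adj (mexp (t *\<^sub>R X)) = mexp (t *\<^sub>R adj (X::complex^'n::finite^'n))"
proof -
  have "adj (mexp (t *\<^sub>R X)) = (\<Sum>k. adj ((t ^ k / fact k) *\<^sub>R mpow X k))"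
    unfolding mexp_series by (rule bounded_linear.suminf[OF bounded_linear_adj mexp_ser_props(1)])
  then show ?thesis by (simp add: mexp_series adj_scaleR adj_mpow)
qed



lemma bl_mv: "bounded_linear (\<lambda>x. (A::complex^'n::finite^'n) *v x)"
  using matrix_vector_mul_linear linear_conv_bounded_linear by blast

lemma opnorm_app: "norm (A *v x) \<le> opnorm A * norm x"
  unfolding opnorm_def using onorm[OF bl_mv] .

lemma opnorm_nonneg: "opnorm A \<ge> 0"
  unfolding opnorm_def using onorm_pos_le[OF bl_mv] .

lemma opnorm_le: "(\<And>x. norm ((A::complex^'n::finite^'n) *v x) \<le> b * norm x) \<Longrightarrow> opnorm A \<le> b"
  unfolding opnorm_def by (rule onorm_le)

lemma opnorm_mult: "opnorm ((A::complex^'n::finite^'n) ** B) \<le> opnorm A * opnorm B"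
proof (rule opnorm_le)
  fix x
  have "norm ((A ** B) *v x) = norm (A *v (B *v x))" by (simp add: matrix_vector_mul_assoc)
  also have "\<dots> \<le> opnorm A * norm (B *v x)" by (rule opnorm_app)
  also have "\<dots> \<le> opnorm A * (opnorm B * norm x)" by (intro mult_left_mono opnorm_app opnorm_nonneg)
  finally show "norm ((A ** B) *v x) \<le> opnorm A * opnorm B * norm x" by (simp add: mult.assoc)
qed

lemma opnorm_add: "opnorm ((A::complex^'n::finite^'n) + B) \<le> opnorm A + opnorm B"
proof (rule opnorm_le)
  fix x
  have "norm ((A + B) *v x) = norm (A *v x + B *v x)" by (simp add: matrix_vector_mult_add_rdistrib)
  also have "\<dots> \<le> norm (A *v x) + norm (B *v x)" by (rule norm_triangle_ineq)
  also have "\<dots> \<le> opnorm A * norm x + opnorm B * norm x" by (intro add_mono opnorm_app)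
  finally show "norm ((A + B) *v x) \<le> (opnorm A + opnorm B) * norm x" by (simp add: algebra_simps)
qed

lemma opnorm_diff: "opnorm ((A::complex^'n::finite^'n) - B) \<le> opnorm A + opnorm B"
proof (rule opnorm_le)
  fix x
  have "norm ((A - B) *v x) = norm (A *v x - B *v x)" by (simp add: matrix_vector_mult_diff_rdistrib)
  also have "\<dots> \<le> norm (A *v x) + norm (B *v x)" by (rule norm_triangle_ineq4)
  also have "\<dots> \<le> opnorm A * norm x + opnorm B * norm x" by (intro add_mono opnorm_app)
  finally show "norm ((A - B) *v x) \<le> (opnorm A + opnorm B) * norm x" by (simp add: algebra_simps)
qed

lemma opnorm_scaleR: "opnorm ((r::real) *\<^sub>R (A::complex^'n::finite^'n)) \<le> \<bar>r\<bar> * opnorm A"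
proof (rule opnorm_le)
  fix x
  have "(r *\<^sub>R A) *v x = r *\<^sub>R (A *v x)"
    by (vector matrix_vector_mult_def scaleR_sum_right)
  then have "norm ((r *\<^sub>R A) *v x) = \<bar>r\<bar> * norm (A *v x)" by simp
  also have "\<dots> \<le> \<bar>r\<bar> * (opnorm A * norm x)" by (intro mult_left_mono opnorm_app) auto
  finally show "norm ((r *\<^sub>R A) *v x) \<le> \<bar>r\<bar> * opnorm A * norm x" by (simp add: mult.assoc)
qed

lemma opnorm_sum: "finite I \<Longrightarrow> opnorm (\<Sum>i\<in>I. f i) \<le> (\<Sum>i\<in>I. opnorm (f i :: complex^'n::finite^'n))"
proof (induction I rule: finite_induct)
  case empty
  have "opnorm (0::complex^'n^'n) \<le> 0" by (rule opnorm_le) simp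
  then show ?case by simp
next
  case (insert a F)
  then show ?case using opnorm_add[of "f a" "sum f F"] by simp
qed

lemma inner_complex_mult: "inner ((a::complex) * b) c = inner b (cnj a * c)"
  by (simp add: inner_complex_def algebra_simps)

lemma adj_inner: "inner ((M::complex^'n::finite^'n) *v x) y = inner x (adj M *v y)"
proof -
  have "inner (M *v x) y = (\<Sum>i\<in>UNIV. \<Sum>j\<in>UNIV. inner (M $ i $ j * x $ j) (y $ i))"
    by (simp add: inner_vec_def matrix_vector_mult_def inner_sum_left)
  also have "\<dots> = (\<Sum>j\<in>UNIV. \<Sum>i\<in>UNIV. inner (x $ j) (cnj (M $ i $ j) * y $ i))"
    by (subst sum.swap) (simp add: inner_complex_mult)
  also have "\<dots> = inner x (adj M *v y)"
    by (simp add: inner_vec_def matrix_vector_mult_def inner_sum_right adj_def)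
  finally show ?thesis .
qed

lemma isometry_norm: "adj U ** U = mat 1 \<Longrightarrow> norm ((U::complex^'n::finite^'n) *v x) = norm x"
proof -
  assume u: "adj U ** U = mat 1"
  have "inner (U *v x) (U *v x) = inner x (adj U *v (U *v x))" by (rule adj_inner)
  also have "\<dots> = inner x x" by (simp add: matrix_vector_mul_assoc u)
  finally show ?thesis by (simp add: norm_eq_sqrt_inner)
qed

lemma opnorm_iso_left: "adj U ** U = mat 1 \<Longrightarrow> opnorm ((U::complex^'n::finite^'n) ** M) \<le> opnorm M"
proof (rule opnorm_le)
  fix x assume u: "adj U ** U = mat 1"
  have "norm ((U ** M) *v x) = norm (M *v x)" by (simp add: matrix_vector_mul_assoc[symmetric] isometry_norm[OF u])
  then show "norm ((U ** M) *v x) \<le> opnorm M * norm x" using opnorm_app by simp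
qed

lemma opnorm_iso_right: "adj U ** U = mat 1 \<Longrightarrow> opnorm (M ** (U::complex^'n::finite^'n)) \<le> opnorm M"
proof (rule opnorm_le)
  fix x assume u: "adj U ** U = mat 1"
  have "norm ((M ** U) *v x) = norm (M *v (U *v x))" by (simp add: matrix_vector_mul_assoc)
  also have "\<dots> \<le> opnorm M * norm (U *v x)" by (rule opnorm_app)
  finally show "norm ((M ** U) *v x) \<le> opnorm M * norm x" by (simp add: isometry_norm[OF u])
qed

lemma opnorm_iso_left_eq: "adj U ** U = mat 1 \<Longrightarrow> opnorm ((U::complex^'n::finite^'n) ** M) = opnorm M"
proof -
  assume u: "adj U ** U = mat 1"
  have "opnorm M = opnorm (adj U ** (U ** M))" by (simp add: matrix_mul_assoc u)
  also have "\<dots> \<le> opnorm (adj U) * opnorm (U ** M)" by (rule opnorm_mult)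
  also have "opnorm (adj U) \<le> 1"
  proof (rule opnorm_le)
    fix x
    have "norm (adj U *v x) \<le> norm x"
    proof -
      have "norm (adj U *v x) ^ 2 = inner (adj U *v x) (adj U *v x)" by (simp add: power2_norm_eq_inner)
      also have "\<dots> = inner x (U *v (adj U *v x))" by (simp add: adj_inner)
      also have "\<dots> \<le> norm x * norm (U *v (adj U *v x))" by (rule norm_cauchy_schwarz)
      also have "\<dots> = norm x * norm (adj U *v x)" by (simp add: isometry_norm[OF u])
      finally have "norm (adj U *v x) ^ 2 \<le> norm x * norm (adj U *v x)" .
      then show ?thesis by (cases "norm (adj U *v x) = 0") (auto simp: power2_eq_square)
    qed
    then show "norm (adj U *v x) \<le> 1 * norm x" by simp
  qed
  then have "opnorm (adj U) * opnorm (U ** M) \<le> 1 * opnorm (U ** M)"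
    by (intro mult_right_mono opnorm_nonneg)
  finally show ?thesis using opnorm_iso_left[OF u, of M] by simp
qed



definition cin :: "complex^'n::finite \<Rightarrow> complex^'n \<Rightarrow> complex" where
  "cin x y = (\<Sum>i\<in>UNIV. x $ i * cnj (y $ i))"

lemma cin_adj: "cin ((M::complex^'n::finite^'n) *v x) y = cin x (adj M *v y)"
proof -
  have "cin (M *v x) y = (\<Sum>i\<in>UNIV. \<Sum>j\<in>UNIV. M $ i $ j * x $ j * cnj (y $ i))"
    by (simp add: cin_def matrix_vector_mult_def sum_distrib_right)
  also have "\<dots> = (\<Sum>j\<in>UNIV. \<Sum>i\<in>UNIV. x $ j * cnj (cnj (M $ i $ j) * y $ i))"
    by (subst sum.swap) (simp add: mult.commute mult.left_commute)
  also have "\<dots> = cin x (adj M *v y)"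
    by (simp add: cin_def matrix_vector_mult_def adj_def sum_distrib_left)
  finally show ?thesis .
qed

lemma cin_smult_left: "cin (c *s x) y = c * cin x y"
  by (simp add: cin_def sum_distrib_left mult.assoc)

lemma cin_smult_right: "cin x (c *s y) = cnj c * cin x y"
  by (simp add: cin_def sum_distrib_left mult.assoc mult.left_commute)

lemma inner_cin: "inner x y = Re (cin x y)"
  by (simp add: cin_def inner_vec_def inner_complex_def)

lemma cin_self: "cin x x = of_real (norm x ^ 2)"
proof -
  have "cin x x = (\<Sum>i\<in>UNIV. of_real (norm (x $ i) ^ 2))"
    unfolding cin_def by (intro sum.cong refl) (metis complex_norm_square of_real_power)
  also have "\<dots> = of_real (\<Sum>i\<in>UNIV. norm (x $ i) ^ 2)" by simp
  also have "(\<Sum>i\<in>UNIV. norm (x $ i) ^ 2) = norm x ^ 2"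
    by (simp add: norm_vec_def L2_set_def sum_nonneg)
  finally show ?thesis .
qed

lemma herm_inner: "hermitian H \<Longrightarrow> inner ((H::complex^'n::finite^'n) *v x) y = inner x (H *v y)"
  using adj_inner[of H x y] by (simp add: hermitian_def)

lemma herm_eig_rel:
  assumes h: "hermitian (H::complex^'n::finite^'n)"
    and v: "H *v v = c *s v" and w: "H *v w = d *s w"
  shows "(c - cnj d) * cin v w = 0"
proof -
  have "c * cin v w = cin (H *v v) w" by (simp add: v cin_smult_left)
  also have "\<dots> = cin v (H *v w)" using cin_adj[of H v w] h by (simp add: hermitian_def)
  also have "\<dots> = cnj d * cin v w" by (simp add: w cin_smult_right)
  finally show ?thesis by (simp add: algebra_simps)
qed

lemma herm_eig_real:
  assumes h: "hermitian (H::complex^'n::finite^'n)" and c: "c \<in> eigenvalues H"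
  shows "c = of_real (Re c)"
proof -
  obtain v where v: "v \<noteq> 0" "H *v v = c *s v" using c by (auto simp: eigenvalues_def)
  have "(c - cnj c) * cin v v = 0" by (rule herm_eig_rel[OF h v(2) v(2)])
  moreover have "cin v v \<noteq> 0" using v(1) by (simp add: cin_self)
  ultimately have "c = cnj c" by simp
  then have "Im c = 0" by (simp add: complex_eq_iff)
  then show ?thesis by (simp add: complex_eq_iff)
qed

lemma herm_eig_finite:
  assumes h: "hermitian (H::complex^'n::finite^'n)"
  shows "finite (eigenvalues H)"
proof -
  define ev where "ev c = (SOME v. v \<noteq> 0 \<and> H *v v = c *s v)" for c
  have ev: "ev c \<noteq> 0 \<and> H *v ev c = c *s ev c" if "c \<in> eigenvalues H" for c
  proof -
    from that obtain v where "v \<noteq> 0 \<and> H *v v = c *s v" by (auto simp: eigenvalues_def)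
    then show ?thesis unfolding ev_def by (rule someI)
  qed
  have inj: "inj_on ev (eigenvalues H)"
  proof (rule inj_onI)
    fix c d assume cd: "c \<in> eigenvalues H" "d \<in> eigenvalues H" "ev c = ev d"
    have "c *s ev c = H *v ev c" using conjunct2[OF ev[OF cd(1)]] by simp
    also have "\<dots> = H *v ev d" using cd(3) by simp
    also have "\<dots> = d *s ev d" using conjunct2[OF ev[OF cd(2)]] by simp
    finally have e: "c *s ev c = d *s ev c" using cd(3) by simp
    have "ev c \<noteq> 0" using conjunct1[OF ev[OF cd(1)]] .
    then obtain i where i: "ev c $ i \<noteq> 0" by (auto simp: vec_eq_iff)
    from e have "c * ev c $ i = d * ev c $ i" by (metis vector_smult_component)
    then show "c = d" using i by simp
  qed
  have orth: "pairwise orthogonal (ev ` eigenvalues H)"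
    unfolding pairwise_def
  proof (intro ballI impI)
    fix x y assume xy: "x \<in> ev ` eigenvalues H" "y \<in> ev ` eigenvalues H" "x \<noteq> y"
    then obtain c d where cd: "c \<in> eigenvalues H" "d \<in> eigenvalues H" "x = ev c" "y = ev d" by blast
    have "c \<noteq> d" using xy(3) cd by blast
    have "Im d = 0" using arg_cong[OF herm_eig_real[OF h cd(2)], of Im] by simp
    then have rd: "cnj d = d" by (simp add: complex_eq_iff)
    have "(c - cnj d) * cin (ev c) (ev d) = 0"
      using herm_eig_rel[OF h conjunct2[OF ev[OF cd(1)]] conjunct2[OF ev[OF cd(2)]]] .
    then have "cin (ev c) (ev d) = 0" using \<open>c \<noteq> d\<close> rd by simp
    then show "orthogonal x y" by (simp add: cd orthogonal_def inner_cin)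
  qed
  have z: "0 \<notin> ev ` eigenvalues H"
  proof
    assume "0 \<in> ev ` eigenvalues H"
    then obtain c where c: "c \<in> eigenvalues H" and c0: "0 = ev c" by (rule imageE)
    show False using conjunct1[OF ev[OF c]] c0 by simp
  qed
  have "independent (ev ` eigenvalues H)" by (rule pairwise_orthogonal_independent[OF orth z])
  then have "finite (ev ` eigenvalues H)" by (rule finiteI_independent)
  then show ?thesis using inj by (simp add: finite_image_iff)
qed



lemma mv_add: "(M::complex^'n::finite^'n) *v (x + y) = M *v x + M *v y"
  by (simp add: matrix_vector_right_distrib)

lemma mv_diff: "(M::complex^'n::finite^'n) *v (x - y) = M *v x - M *v y"
  by (simp add: matrix_vector_mult_diff_distrib)

lemma mv_scaleR: "(M::complex^'n::finite^'n) *v (t *\<^sub>R y) = t *\<^sub>R (M *v y)"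
  by (simp add: vec_eq_iff matrix_vector_mult_def scaleR_sum_right)

lemma psd_zero:
  fixes M :: "complex^'n::finite^'n"
  assumes sa: "\<And>x y. inner (M *v x) y = inner x (M *v y)"
    and psd: "\<And>x. inner (M *v x) x \<ge> 0"
    and z: "inner (M *v x0) x0 = 0"
  shows "M *v x0 = 0"
proof (rule ccontr)
  assume ne: "M *v x0 \<noteq> 0"
  define y where "y = M *v x0"
  define n where "n = inner y y"
  define q where "q = inner (M *v y) y"
  have n: "n > 0" using ne by (simp add: n_def y_def)
  have q: "q \<ge> 0" using psd by (simp add: q_def)
  have expand: "inner (M *v (x0 + t *\<^sub>R y)) (x0 + t *\<^sub>R y) = 2 * t * n + t * t * q" for t
  proof -
    have e1: "M *v (x0 + t *\<^sub>R y) = M *v x0 + t *\<^sub>R (M *v y)" by (simp add: mv_add mv_scaleR)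
    have e2: "inner (M *v x0 + t *\<^sub>R (M *v y)) (x0 + t *\<^sub>R y)
        = inner (M *v x0) x0 + t * inner (M *v x0) y + t * inner (M *v y) x0 + t * t * inner (M *v y) y"
      by (simp add: inner_add_left inner_add_right algebra_simps)
    have e3: "inner (M *v y) x0 = n" using sa[of y x0] by (simp add: inner_commute n_def y_def)
    have e4: "inner (M *v x0) y = n" by (simp add: n_def y_def)
    show ?thesis unfolding e1 e2 e3 e4 z q_def[symmetric] by simp
  qed
  define t where "t = - n / (q + 1)"
  have "2 * t * n + t * t * q < 0"
  proof -
    have "2 * t * n + t * t * q = t * (2 * n + t * q)" by (simp add: algebra_simps)
    moreover have "t < 0" using n q by (simp add: t_def)
    moreover have "t * q > - n"
    proof -
      have qp: "q + 1 > 0" using q by simp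
      have "t * q = - (n * q / (q + 1))" by (simp add: t_def)
      moreover have "n * q / (q + 1) < n"
      proof -
        have "n * q / (q + 1) < n * (q + 1) / (q + 1)"
          by (rule divide_strict_right_mono) (use n qp in auto)
        also have "\<dots> = n" using qp by simp
        finally show ?thesis .
      qed
      ultimately show ?thesis by simp
    qed
    then have "2 * n + t * q > 0" using n by simp
    ultimately show ?thesis by (simp add: mult_neg_pos)
  qed
  with expand[of t] psd[of "x0 + t *\<^sub>R y"] show False by simp
qed

lemma scal_mat_mv: "(((c::real) *\<^sub>R mat 1) :: complex^'n::finite^'n) *v x = c *\<^sub>R x"
  by (simp add: vec_eq_iff matrix_vector_mult_def mat_def if_distrib if_distribR sum.delta' cong: if_cong)

lemma unit_exists: "\<exists>u::complex^'n::finite. norm u = 1"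
proof -
  obtain i :: 'n where True by blast
  have "norm (axis i (1::complex)) = 1" by (simp add: inner_axis' norm_eq_1)
  then show ?thesis by blast
qed

lemma rayleigh_max:
  assumes h: "hermitian (H::complex^'n::finite^'n)"
  shows "\<exists>\<mu>. complex_of_real \<mu> \<in> eigenvalues H \<and> (\<forall>x. inner (H *v x) x \<le> \<mu> * norm x ^ 2)"
proof -
  define f where "f x = inner (H *v x) x" for x
  have cont: "continuous_on (sphere 0 1) f"
    unfolding f_def by (intro continuous_intros)
  have ne: "sphere (0::complex^'n) 1 \<noteq> {}" using unit_exists by auto
  obtain x0 where x0: "x0 \<in> sphere 0 1" "\<And>y. y \<in> sphere 0 1 \<Longrightarrow> f y \<le> f x0"
    using continuous_attains_sup[OF compact_sphere ne cont] by blast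
  define \<mu> where "\<mu> = f x0"
  have fx: "f x \<le> \<mu> * norm x ^ 2" for x
  proof (cases "x = 0")
    case True then show ?thesis by (simp add: f_def)
  next
    case False
    define u where "u = (1 / norm x) *\<^sub>R x"
    have "u \<in> sphere 0 1" using False by (simp add: u_def)
    then have "f u \<le> \<mu>" using x0 by (simp add: \<mu>_def)
    moreover have "f u = f x / norm x ^ 2"
      by (simp add: f_def u_def mv_scaleR power2_eq_square)
    ultimately show ?thesis using False by (simp add: divide_le_eq mult.commute)
  qed
  define M where "M = \<mu> *\<^sub>R mat 1 - H"
  have Mv: "M *v x = \<mu> *\<^sub>R x - H *v x" for x
    by (simp add: M_def matrix_vector_mult_diff_rdistrib scal_mat_mv)
  have sa: "inner (M *v x) y = inner x (M *v y)" for x y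
    using herm_inner[OF h, of x y] by (simp add: Mv inner_diff_left inner_diff_right)
  have psd: "inner (M *v x) x \<ge> 0" for x
    using fx[of x] by (simp add: Mv inner_diff_left f_def power2_norm_eq_inner)
  have n1: "norm x0 = 1" using x0(1) by simp
  have z: "inner (M *v x0) x0 = 0"
    using n1 by (simp add: Mv inner_diff_left \<mu>_def f_def power2_norm_eq_inner[symmetric])
  have "M *v x0 = 0" by (rule psd_zero[OF sa psd z])
  then have "H *v x0 = complex_of_real \<mu> *s x0"
    by (simp add: Mv) (vector scaleR_conv_of_real)
  moreover have "x0 \<noteq> 0" using n1 by auto
  ultimately have "complex_of_real \<mu> \<in> eigenvalues H" by (auto simp: eigenvalues_def)
  then show ?thesis using fx unfolding f_def by blast
qed



lemma adj_neg: "adj (- A) = - adj (A::complex^'n::finite^'n)"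
  by (simp add: adj_def vec_eq_iff)

lemma mv_neg: "(- M::complex^'n::finite^'n) *v x = - (M *v x)"
  by (vector matrix_vector_mult_def sum_negf[symmetric])

lemma polarization_bound:
  fixes N :: "complex^'n::finite^'n"
  assumes sa: "\<And>x y. inner (N *v x) y = inner x (N *v y)"
    and b: "\<And>x. \<bar>inner (N *v x) x\<bar> \<le> r * norm x ^ 2"
  shows "norm (N *v x) \<le> r * norm x"
proof (cases "N *v x = 0")
  case True
  obtain u :: "complex^'n" where "norm u = 1" using unit_exists by blast
  then have "\<bar>inner (N *v u) u\<bar> \<le> r" using b[of u] by simp
  then have "r \<ge> 0" by (rule order_trans[OF abs_ge_zero])
  then show ?thesis using True by simp
next
  case False
  define q where "q z = inner (N *v z) z" for z
  have pol: "4 * inner (N *v x) y = q (x + y) - q (x - y)" for y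
  proof -
    have "inner (N *v y) x = inner (N *v x) y" using sa[of y x] by (simp add: inner_commute)
    then show ?thesis by (simp add: q_def mv_add mv_diff inner_add_left inner_add_right inner_diff_left inner_diff_right)
  qed
  have par: "norm (x + y) ^ 2 + norm (x - y) ^ 2 = 2 * (norm x ^ 2 + norm y ^ 2)" for y :: "complex^'n"
    by (simp add: power2_norm_eq_inner inner_add_left inner_add_right inner_diff_left inner_diff_right inner_commute)
  have le: "4 * inner (N *v x) y \<le> 2 * r * (norm x ^ 2 + norm y ^ 2)" for y
  proof -
    have "q (x + y) \<le> r * norm (x + y) ^ 2" using b[of "x + y"] by (simp add: q_def)
    moreover have "- q (x - y) \<le> r * norm (x - y) ^ 2" using b[of "x - y"] by (simp add: q_def)
    ultimately have "4 * inner (N *v x) y \<le> r * (norm (x + y) ^ 2 + norm (x - y) ^ 2)"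
      using pol[of y] by (simp add: algebra_simps)
    moreover have "r * (norm (x + y) ^ 2 + norm (x - y) ^ 2) = 2 * r * (norm x ^ 2 + norm y ^ 2)"
      using par[of y] by simp
    ultimately show ?thesis by linarith
  qed
  have xne: "x \<noteq> 0" using False by auto
  define y where "y = (norm x / norm (N *v x)) *\<^sub>R (N *v x)"
  have ny: "norm y = norm x" using False by (simp add: y_def)
  have iy: "inner (N *v x) y = norm x * norm (N *v x)"
    using False by (simp add: y_def power2_norm_eq_inner[symmetric] power2_eq_square)
  have "4 * (norm x * norm (N *v x)) \<le> 4 * (r * norm x * norm x)"
    using le[of y] ny iy by (simp add: power2_eq_square algebra_simps)
  then have "norm x * norm (N *v x) \<le> norm x * (r * norm x)" by (simp add: algebra_simps)
  then show ?thesis using xne by (simp add: mult_le_cancel_left)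
qed

lemma herm_shift_bound:
  assumes h: "hermitian (H::complex^'n::finite^'n)"
  shows "\<exists>c::real. opnorm (H - c *\<^sub>R mat 1) \<le> omega_max H"
proof -
  obtain \<mu> where mu: "complex_of_real \<mu> \<in> eigenvalues H" "\<And>x. inner (H *v x) x \<le> \<mu> * norm x ^ 2"
    using rayleigh_max[OF h] by blast
  have hn: "hermitian (- H)" using h by (simp add: hermitian_def adj_neg)
  obtain \<nu>' where nu': "complex_of_real \<nu>' \<in> eigenvalues (- H)" "\<And>x. inner ((- H) *v x) x \<le> \<nu>' * norm x ^ 2"
    using rayleigh_max[OF hn] by blast
  define \<nu> where "\<nu> = - \<nu>'"
  have nu1: "complex_of_real \<nu> \<in> eigenvalues H"
  proof -
    obtain v where "v \<noteq> 0" "(- H) *v v = complex_of_real \<nu>' *s v" using nu'(1) by (auto simp: eigenvalues_def)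
    then have "H *v v = complex_of_real \<nu> *s v"
    proof -
      assume a: "(- H) *v v = complex_of_real \<nu>' *s v"
      have "H *v v = - ((- H) *v v)" by (simp add: mv_neg)
      also have "\<dots> = - (complex_of_real \<nu>' *s v)" by (simp add: a)
      also have "\<dots> = complex_of_real \<nu> *s v" by (simp add: \<nu>_def vec_eq_iff)
      finally show ?thesis .
    qed
    then show ?thesis using \<open>v \<noteq> 0\<close> by (auto simp: eigenvalues_def)
  qed
  have nu2: "\<nu> * norm x ^ 2 \<le> inner (H *v x) x" for x
    using nu'(2)[of x] by (simp add: mv_neg \<nu>_def)
  have fin: "finite (Re ` eigenvalues H)" using herm_eig_finite[OF h] by simp
  have "\<mu> \<le> Max (Re ` eigenvalues H)" using Max_ge[OF fin, of \<mu>] mu(1) by force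
  moreover have "Min (Re ` eigenvalues H) \<le> \<nu>" using Min_le[OF fin, of \<nu>] nu1 by force
  moreover have "\<nu> \<le> \<mu>"
  proof -
    obtain u :: "complex^'n" where "norm u = 1" using unit_exists by blast
    then show ?thesis using mu(2)[of u] nu2[of u] by simp
  qed
  ultimately have om: "\<mu> - \<nu> \<le> omega_max H" by (simp add: omega_max_def)
  define c where "c = (\<mu> + \<nu>) / 2"
  define N where "N = H - c *\<^sub>R mat 1"
  have Nv: "N *v x = H *v x - c *\<^sub>R x" for x
    by (simp add: N_def matrix_vector_mult_diff_rdistrib scal_mat_mv)
  have sa: "inner (N *v x) y = inner x (N *v y)" for x y
    using herm_inner[OF h, of x y] by (simp add: Nv inner_diff_left inner_diff_right)
  have b: "\<bar>inner (N *v x) x\<bar> \<le> ((\<mu> - \<nu>) / 2) * norm x ^ 2" for x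
  proof -
    have e0: "inner (N *v x) x = inner (H *v x) x - c * norm x ^ 2"
      by (simp add: Nv inner_diff_left power2_norm_eq_inner)
    have e1: "c * norm x ^ 2 = (\<mu> * norm x ^ 2 + \<nu> * norm x ^ 2) / 2" by (simp add: c_def field_simps)
    have e2: "((\<mu> - \<nu>) / 2) * norm x ^ 2 = (\<mu> * norm x ^ 2 - \<nu> * norm x ^ 2) / 2" by (simp add: field_simps)
    show ?thesis unfolding e0 e1 e2 abs_le_iff by (rule conjI) (use mu(2)[of x] nu2[of x] in \<open>simp add: field_simps\<close>)+
  qed
  have "opnorm N \<le> (\<mu> - \<nu>) / 2"
    by (rule opnorm_le) (rule polarization_bound[OF sa b])
  also have "\<dots> \<le> omega_max H" using om \<open>\<nu> \<le> \<mu>\<close> by simp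
  finally show ?thesis unfolding N_def by blast
qed



definition adX :: "complex^'n::finite^'n \<Rightarrow> complex^'n^'n \<Rightarrow> complex^'n^'n" where
  "adX X Z = X ** Z - Z ** X"

definition Xk :: "(nat \<Rightarrow> complex^'n::finite^'n) \<Rightarrow> nat \<Rightarrow> complex^'n^'n" where
  "Xk H k = cscale \<i> (H k)"

definition Tk :: "(nat \<Rightarrow> complex^'n::finite^'n) \<Rightarrow> (nat \<Rightarrow> complex^'n^'n) \<Rightarrow> nat \<Rightarrow> nat \<Rightarrow> real \<Rightarrow> complex^'n^'n \<Rightarrow> complex^'n^'n" where
  "Tk V H k i t B = mexp (t *\<^sub>R Xk H k) ** (adX (Xk H k) ^^ i) (adj (V k) ** B ** V k) ** mexp (t *\<^sub>R (- Xk H k))"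

lemma linear_adX: "linear (adX (X::complex^'n::finite^'n))"
  by (auto intro!: linearI simp: adX_def matrix_add_ldistrib mm_add_right mm_scaleR_left mm_scaleR_right algebra_simps)

lemma bl_funpow: fixes f :: "'a::real_normed_vector \<Rightarrow> 'a" assumes f: "bounded_linear f" shows "bounded_linear (f ^^ i)"
proof (induction i)
  case 0
  show ?case using bounded_linear_ident by (simp add: id_def)
next
  case (Suc i)
  show ?case using bounded_linear_compose[OF f Suc.IH] by (simp add: o_def)
qed

lemma cscaleR: "(r::real) *\<^sub>R (z::complex) = complex_of_real r * z"
  by (simp add: scaleR_conv_of_real)

lemma bl_L: "bounded_linear (\<lambda>B. (adX (X::complex^'n::finite^'n) ^^ i) (adj W ** B ** W))"
proof -
  have "bounded_linear (adX X)" using linear_adX linear_conv_bounded_linear by blast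
  then have "bounded_linear (adX X ^^ i)" by (rule bl_funpow)
  moreover have "bounded_linear (\<lambda>B. adj W ** B ** (W::complex^'n^'n))"
    using bounded_linear_compose[OF bounded_linear_mm_right[of W] bounded_linear_mm_left[of "adj W"]] .
  ultimately show ?thesis using bounded_linear_compose by blast
qed

lemma bl_Tk: "bounded_linear (Tk V H k i t)"
  unfolding Tk_def
  using bounded_linear_compose[OF bounded_linear_mm_right bounded_linear_compose[OF bounded_linear_mm_left bl_L]]
  by (simp add: o_def)

lemma mexp_neg_deriv: "((\<lambda>t. mexp (t *\<^sub>R (- X))) has_vector_derivative (- X) ** mexp (t *\<^sub>R (- (X::complex^'n::finite^'n)))) (at t)"
  by (rule mexp_deriv)

lemma Tk_deriv:
  assumes g: "(g has_vector_derivative g') (at t)"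
  shows "((\<lambda>t. Tk V H k i t (g t)) has_vector_derivative (Tk V H k (Suc i) t (g t) + Tk V H k i t g')) (at t)"
proof -
  define X where "X = Xk H k"
  define L where "L B = (adX X ^^ i) (adj (V k) ** B ** V k)" for B
  have bl: "bounded_linear L" unfolding L_def by (rule bl_L)
  have Ld: "((\<lambda>t. L (g t)) has_vector_derivative L g') (at t)"
    by (rule bounded_linear.has_vector_derivative[OF bl g])
  have d1: "((\<lambda>t. mexp (t *\<^sub>R X) ** L (g t)) has_vector_derivative
      (mexp (t *\<^sub>R X) ** L g' + (X ** mexp (t *\<^sub>R X)) ** L (g t))) (at t)"
    by (rule bounded_bilinear.has_vector_derivative[OF bounded_bilinear_mm mexp_deriv Ld])
  have d2: "((\<lambda>t. mexp (t *\<^sub>R X) ** L (g t) ** mexp (t *\<^sub>R (- X))) has_vector_derivative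
      ((mexp (t *\<^sub>R X) ** L (g t)) ** ((- X) ** mexp (t *\<^sub>R (- X))) +
       (mexp (t *\<^sub>R X) ** L g' + (X ** mexp (t *\<^sub>R X)) ** L (g t)) ** mexp (t *\<^sub>R (- X)))) (at t)"
    by (rule bounded_bilinear.has_vector_derivative[OF bounded_bilinear_mm d1 mexp_neg_deriv])
  have eq: "(mexp (t *\<^sub>R X) ** L (g t)) ** ((- X) ** mexp (t *\<^sub>R (- X))) +
       (mexp (t *\<^sub>R X) ** L g' + (X ** mexp (t *\<^sub>R X)) ** L (g t)) ** mexp (t *\<^sub>R (- X))
     = mexp (t *\<^sub>R X) ** adX X (L (g t)) ** mexp (t *\<^sub>R (- X)) + mexp (t *\<^sub>R X) ** L g' ** mexp (t *\<^sub>R (- X))"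
    by (simp add: adX_def mexp_comm matrix_mul_assoc mm_minus_left mm_minus_right mm_diff_left mm_diff_right
        mm_add_right matrix_add_ldistrib algebra_simps)
  have "adX X (L (g t)) = (adX X ^^ Suc i) (adj (V k) ** g t ** V k)" by (simp add: L_def)
  then show ?thesis using d2 unfolding eq by (simp add: Tk_def X_def L_def)
qed

lemma Tk_deriv_const: "((\<lambda>t. Tk V H k i t B) has_vector_derivative Tk V H k (Suc i) t B) (at t)"
proof -
  have z: "Tk V H k i t 0 = 0" by (rule linear_0[OF bounded_linear.linear[OF bl_Tk]])
  show ?thesis using Tk_deriv[of "\<lambda>t. B" 0 t V H k i] by (simp add: z)
qed

lemma Utilde_Tk: "Utilde V H \<theta> k B = Tk V H k 0 \<theta> B"
proof -
  have a: "cscale (\<i> * complex_of_real \<theta>) (H k) = \<theta> *\<^sub>R Xk H k"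
    by (simp add: cscale_def Xk_def vec_eq_iff cscaleR mult.commute mult.left_commute)
  have b: "cscale (- \<i> * complex_of_real \<theta>) (H k) = \<theta> *\<^sub>R (- Xk H k)"
    by (simp add: cscale_def Xk_def vec_eq_iff cscaleR mult.commute mult.left_commute)
  show ?thesis unfolding Utilde_def Tk_def a b by (simp add: matrix_mul_assoc)
qed

lemma nth_deriv_Tk: "nth_deriv a (\<lambda>\<theta>. Tk V H k 0 \<theta> B) = (\<lambda>\<theta>. Tk V H k a \<theta> B)"
proof (induction a)
  case (Suc a)
  show ?case by (simp add: Suc.IH vector_derivative_at[OF Tk_deriv_const])
qed simp

lemma Utilde_deriv_Tk: "Utilde_deriv V H a \<phi> k B = Tk V H k a \<phi> B"
  unfolding Utilde_deriv_def Utilde_Tk nth_deriv_Tk ..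



lemma pascal_sum:
  fixes F :: "nat \<Rightarrow> nat \<Rightarrow> 'a::real_vector"
  shows "(\<Sum>i\<le>p. real (p choose i) *\<^sub>R (F (Suc i) (p - i) + F i (Suc p - i)))
       = (\<Sum>i\<le>Suc p. real (Suc p choose i) *\<^sub>R F i (Suc p - i))"
proof -
  define G where "G i = F i (Suc p - i)" for i
  have "(\<Sum>i\<le>Suc p. real (Suc p choose i) *\<^sub>R G i)
      = G 0 + (\<Sum>i\<le>p. real (Suc p choose Suc i) *\<^sub>R G (Suc i))"
    by (subst sum.atMost_Suc_shift) simp
  also have "\<dots> = (\<Sum>i\<le>p. real (p choose i) *\<^sub>R G (Suc i)) + (G 0 + (\<Sum>i\<le>p. real (p choose Suc i) *\<^sub>R G (Suc i)))"
    by (simp add: scaleR_add_left sum.distrib)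
  also have "G 0 + (\<Sum>i\<le>p. real (p choose Suc i) *\<^sub>R G (Suc i)) = (\<Sum>i\<le>Suc p. real (p choose i) *\<^sub>R G i)"
    unfolding sum.atMost_Suc_shift by simp
  also have "\<dots> = (\<Sum>i\<le>p. real (p choose i) *\<^sub>R G i)" by simp
  finally have "(\<Sum>i\<le>Suc p. real (Suc p choose i) *\<^sub>R G i)
      = (\<Sum>i\<le>p. real (p choose i) *\<^sub>R (G (Suc i) + G i))"
    by (simp add: scaleR_add_right sum.distrib)
  also have "\<dots> = (\<Sum>i\<le>p. real (p choose i) *\<^sub>R (F (Suc i) (p - i) + F i (Suc p - i)))"
    by (intro sum.cong) (auto simp: G_def Suc_diff_le)
  finally show ?thesis by (simp add: G_def)
qed

fun Sx :: "(nat \<Rightarrow> complex^'n::finite^'n) \<Rightarrow> (nat \<Rightarrow> complex^'n^'n) \<Rightarrow> complex^'n^'n \<Rightarrow> nat \<Rightarrow> nat \<Rightarrow> real \<Rightarrow> complex^'n^'n" where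
  "Sx V H A 0 p t = (if p = 0 then A else 0)"
| "Sx V H A (Suc j) p t = (\<Sum>i\<le>p. real (p choose i) *\<^sub>R Tk V H (Suc j) i t (Sx V H A j (p - i) t))"

lemma Sx_deriv: "((\<lambda>t. Sx V H A j p t) has_vector_derivative Sx V H A j (Suc p) t) (at t)"
proof (induction j arbitrary: p t)
  case 0
  then show ?case by simp
next
  case (Suc j)
  define F where "F i l = Tk V H (Suc j) i t (Sx V H A j l t)" for i l
  have "((\<lambda>t. \<Sum>i\<le>p. real (p choose i) *\<^sub>R Tk V H (Suc j) i t (Sx V H A j (p - i) t)) has_vector_derivative
        (\<Sum>i\<le>p. real (p choose i) *\<^sub>R (F (Suc i) (p - i) + F i (Suc (p - i))))) (at t)"
    unfolding F_def
    by (intro has_vector_derivative_sum bounded_linear.has_vector_derivative[OF bounded_linear_scaleR_right]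
        Tk_deriv Suc.IH)
  moreover have eq: "(\<Sum>i\<le>p. real (p choose i) *\<^sub>R (F (Suc i) (p - i) + F i (Suc (p - i))))
      = (\<Sum>i\<le>p. real (p choose i) *\<^sub>R (F (Suc i) (p - i) + F i (Suc p - i)))"
    by (intro sum.cong) (auto simp: Suc_diff_le)
  ultimately have deriv2: "((\<lambda>t. \<Sum>i\<le>p. real (p choose i) *\<^sub>R Tk V H (Suc j) i t (Sx V H A j (p - i) t)) has_vector_derivative
        (\<Sum>i\<le>Suc p. real (Suc p choose i) *\<^sub>R F i (Suc p - i))) (at t)"
    unfolding pascal_sum by simp
  have target: "Sx V H A (Suc j) (Suc p) t = (\<Sum>i\<le>Suc p. real (Suc p choose i) *\<^sub>R F i (Suc p - i))"
    by (simp only: Sx.simps F_def)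
  show ?case unfolding target using deriv2 by (simp only: Sx.simps)
qed

lemma nth_deriv_Sx: "nth_deriv p (\<lambda>t. Sx V H A j 0 t) = (\<lambda>t. Sx V H A j p t)"
proof (induction p)
  case (Suc p)
  show ?case by (simp add: Suc.IH vector_derivative_at[OF Sx_deriv])
qed simp

lemma opnorm_zero: "opnorm (0::complex^'n::finite^'n) = 0"
proof -
  have "opnorm (0::complex^'n^'n) \<le> 0" by (rule opnorm_le) simp
  then show ?thesis using opnorm_nonneg[of "0::complex^'n^'n"] by simp
qed

lemma cscale_mat: "cscale c M = mat c ** (M::complex^'n::finite^'n)"
  by (simp add: vec_eq_iff cscale_def matrix_matrix_mult_def mat_def if_distrib if_distribR sum.delta' cong: if_cong)

lemma cscale_mm_left: "cscale c M ** Z = cscale c (M ** (Z::complex^'n::finite^'n))"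
  by (simp add: vec_eq_iff cscale_def matrix_matrix_mult_def sum_distrib_left mult.assoc)

lemma cscale_mm_right: "Z ** cscale c M = cscale c (Z ** (M::complex^'n::finite^'n))"
  by (simp add: vec_eq_iff cscale_def matrix_matrix_mult_def sum_distrib_left mult.left_commute)

lemma cscale_diff: "cscale c A - cscale c B = cscale c (A - (B::complex^'n::finite^'n))"
  by (simp add: vec_eq_iff cscale_def right_diff_distrib)

lemma opnorm_cscale_i: "opnorm (cscale \<i> (M::complex^'n::finite^'n)) \<le> opnorm M"
proof -
  have "adj (mat \<i> :: complex^'n^'n) = mat (- \<i>)" by (simp add: adj_def mat_def vec_eq_iff)
  then have "adj (mat \<i>) ** (mat \<i> :: complex^'n^'n) = cscale (- \<i>) (mat \<i>)" by (simp add: cscale_mat)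
  also have "\<dots> = mat 1" by (simp add: cscale_def mat_def vec_eq_iff)
  finally have "adj (mat \<i>) ** (mat \<i> :: complex^'n^'n) = mat 1" .
  then show ?thesis unfolding cscale_mat by (rule opnorm_iso_left)
qed

lemma adX_bound:
  assumes h: "hermitian (H::complex^'n::finite^'n)"
  shows "opnorm (adX (cscale \<i> H) Z) \<le> 2 * omega_max H * opnorm Z"
proof -
  obtain c :: real where c: "opnorm (H - c *\<^sub>R mat 1) \<le> omega_max H" using herm_shift_bound[OF h] by blast
  define N where "N = H - c *\<^sub>R mat 1"
  have "adX (cscale \<i> H) Z = cscale \<i> (N ** Z - Z ** N)"
    by (simp add: adX_def N_def cscale_mm_left cscale_mm_right cscale_diff mm_diff_left mm_diff_right
        mm_scaleR_left mm_scaleR_right)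
  then have "opnorm (adX (cscale \<i> H) Z) \<le> opnorm (N ** Z - Z ** N)" using opnorm_cscale_i by simp
  also have "\<dots> \<le> opnorm (N ** Z) + opnorm (Z ** N)" by (rule opnorm_diff)
  also have "\<dots> \<le> opnorm N * opnorm Z + opnorm Z * opnorm N" by (intro add_mono opnorm_mult)
  also have "\<dots> \<le> 2 * omega_max H * opnorm Z"
  proof -
    have cN: "opnorm N \<le> omega_max H" using c by (simp add: N_def)
    have "opnorm N * opnorm Z \<le> omega_max H * opnorm Z" by (rule mult_right_mono[OF cN opnorm_nonneg])
    then show ?thesis by (simp add: mult.commute)
  qed
  finally show ?thesis .
qed

lemma adX_pow_bound:
  assumes h: "hermitian (H::complex^'n::finite^'n)"
  shows "opnorm ((adX (cscale \<i> H) ^^ i) Z) \<le> (2 * omega_max H) ^ i * opnorm Z"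
proof (induction i)
  case (Suc i)
  have "opnorm ((adX (cscale \<i> H) ^^ Suc i) Z) \<le> 2 * omega_max H * opnorm ((adX (cscale \<i> H) ^^ i) Z)"
    using adX_bound[OF h] by simp
  also have "\<dots> \<le> 2 * omega_max H * ((2 * omega_max H) ^ i * opnorm Z)"
    using Suc by (intro mult_left_mono) (auto simp: omega_max_def)
  finally show ?case by simp
qed simp

lemma adj_mexp_herm:
  assumes h: "hermitian (H k)"
  shows "adj (mexp (t *\<^sub>R Xk H k)) = mexp (t *\<^sub>R (- Xk H k))"
    and "adj (mexp (t *\<^sub>R (- Xk H k))) = mexp (t *\<^sub>R Xk H k)"
proof -
  have ax: "adj (Xk H k) = - Xk H k"
    using h by (simp add: Xk_def adj_cscale hermitian_def) (vector cscale_def)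
  show "adj (mexp (t *\<^sub>R Xk H k)) = mexp (t *\<^sub>R (- Xk H k))" by (simp add: adj_mexp ax)
  show "adj (mexp (t *\<^sub>R (- Xk H k))) = mexp (t *\<^sub>R Xk H k)" unfolding adj_mexp by (simp add: adj_neg ax)
qed

lemma Tk_bound:
  assumes h: "hermitian (H k)" and u: "unitary (V k)"
  shows "opnorm (Tk V H k i t B) \<le> (2 * omega_max (H k)) ^ i * opnorm B"
proof -
  have u1: "adj (mexp (t *\<^sub>R Xk H k)) ** mexp (t *\<^sub>R Xk H k) = mat 1"
    using mexp_inv[of t "- Xk H k"] unfolding adj_mexp_herm(1)[where H=H and k=k, OF h] minus_minus .
  have u2: "adj (mexp (t *\<^sub>R (- Xk H k))) ** mexp (t *\<^sub>R (- Xk H k)) = mat 1"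
    unfolding adj_mexp_herm(2)[where H=H and k=k, OF h] by (rule mexp_inv)
  have u3: "adj (V k) ** V k = mat 1" and u4: "adj (adj (V k)) ** adj (V k) = mat 1"
    using u by (auto simp: unitary_def)
  have "opnorm (Tk V H k i t B) \<le> opnorm ((adX (Xk H k) ^^ i) (adj (V k) ** B ** V k))"
    unfolding Tk_def by (rule order_trans[OF opnorm_iso_right[OF u2] opnorm_iso_left[OF u1]])
  also have "\<dots> \<le> (2 * omega_max (H k)) ^ i * opnorm (adj (V k) ** B ** V k)"
    unfolding Xk_def by (rule adX_pow_bound[OF h])
  also have "opnorm (adj (V k) ** B ** V k) \<le> opnorm B"
    by (rule order_trans[OF opnorm_iso_right[OF u3] opnorm_iso_left[OF u4]])
  then have "(2 * omega_max (H k)) ^ i * opnorm (adj (V k) ** B ** V k) \<le> (2 * omega_max (H k)) ^ i * opnorm B"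
    by (intro mult_left_mono) (auto simp: omega_max_def)
  finally show ?thesis .
qed

lemma Sx_bound:
  assumes h: "\<forall>k\<in>{1..j}. hermitian (H k)" and u: "\<forall>k\<in>{1..j}. unitary (V k)"
  shows "opnorm (Sx V H A j p t) \<le> (\<Sum>k=1..j. 2 * omega_max (H k)) ^ p * opnorm A"
  using h u
proof (induction j arbitrary: p)
  case 0
  then show ?case by (cases p) (auto simp: opnorm_zero opnorm_nonneg)
next
  case (Suc j)
  define c where "c = 2 * omega_max (H (Suc j))"
  define s where "s = (\<Sum>k=1..j. 2 * omega_max (H k))"
  have c0: "c \<ge> 0" by (simp add: c_def omega_max_def)
  have s0: "s \<ge> 0" by (simp add: s_def omega_max_def sum_nonneg)
  have IH: "opnorm (Sx V H A j l t) \<le> s ^ l * opnorm A" for l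
    using Suc by (simp add: s_def)
  have hj: "hermitian (H (Suc j))" "unitary (V (Suc j))" using Suc.prems by auto
  have "opnorm (Sx V H A (Suc j) p t) \<le> (\<Sum>i\<le>p. opnorm (real (p choose i) *\<^sub>R Tk V H (Suc j) i t (Sx V H A j (p - i) t)))"
    by simp (rule opnorm_sum, simp)
  also have "\<dots> \<le> (\<Sum>i\<le>p. real (p choose i) * (c ^ i * (s ^ (p - i) * opnorm A)))"
  proof (intro sum_mono)
    fix i assume "i \<in> {..p}"
    have "opnorm (real (p choose i) *\<^sub>R Tk V H (Suc j) i t (Sx V H A j (p - i) t))
        \<le> real (p choose i) * opnorm (Tk V H (Suc j) i t (Sx V H A j (p - i) t))"
      using opnorm_scaleR[of "real (p choose i)"] by simp
    also have "\<dots> \<le> real (p choose i) * (c ^ i * opnorm (Sx V H A j (p - i) t))"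
      using Tk_bound[where H=H and V=V and k="Suc j", OF hj] by (intro mult_left_mono) (auto simp: c_def)
    also have "\<dots> \<le> real (p choose i) * (c ^ i * (s ^ (p - i) * opnorm A))"
      using IH c0 by (intro mult_left_mono) auto
    finally show "opnorm (real (p choose i) *\<^sub>R Tk V H (Suc j) i t (Sx V H A j (p - i) t))
        \<le> real (p choose i) * (c ^ i * (s ^ (p - i) * opnorm A))" .
  qed
  also have "\<dots> = (c + s) ^ p * opnorm A"
    by (simp add: binomial_ring sum_distrib_left sum_distrib_right algebra_simps)
  also have "c + s = (\<Sum>k=1..Suc j. 2 * omega_max (H k))" by (simp add: c_def s_def)
  finally show ?case .
qed



fun Gx :: "(nat \<Rightarrow> complex^'n::finite^'n) \<Rightarrow> (nat \<Rightarrow> complex^'n^'n) \<Rightarrow> complex^'n^'n \<Rightarrow> nat \<Rightarrow> real \<Rightarrow> complex^'n^'n" where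
  "Gx V H A 0 t = A"
| "Gx V H A (Suc j) t = Tk V H (Suc j) 0 t (Gx V H A j t)"

lemma Sx0: "Sx V H A j 0 t = Gx V H A j t"
  by (induction j) auto

lemma Uparam_0: "Uparam 0 V H \<theta> = mat 1"
  by (simp add: Uparam_def)

lemma Uparam_Suc: "Uparam (Suc j) V H \<theta> = Uparam j V H \<theta> ** (V (Suc j) ** mexp (cscale (- \<i> * complex_of_real \<theta>) (H (Suc j))))"
  by (simp add: Uparam_def)

lemma Echan_G:
  assumes "\<forall>k\<in>{1..j}. hermitian (H k)"
  shows "Echan j V H \<theta> A = Gx V H A j \<theta>"
  using assms
proof (induction j)
  case 0
  then show ?case by (simp add: Echan_def Uparam_0)
next
  case (Suc j)
  have h: "hermitian (H (Suc j))" using Suc.prems by auto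
  have b: "cscale (- \<i> * complex_of_real \<theta>) (H (Suc j)) = \<theta> *\<^sub>R (- Xk H (Suc j))"
    by (simp add: cscale_def Xk_def vec_eq_iff cscaleR mult.commute mult.left_commute)
  have "Echan (Suc j) V H \<theta> A = Tk V H (Suc j) 0 \<theta> (Echan j V H \<theta> A)"
    unfolding Echan_def Uparam_Suc b adj_mult adj_mexp_herm(2)[where H=H and k="Suc j", OF h] Tk_def
    by (simp add: matrix_mul_assoc)
  then show ?case using Suc by simp
qed

definition CDx :: "(nat \<Rightarrow> complex^'n::finite^'n) \<Rightarrow> (nat \<Rightarrow> complex^'n^'n) \<Rightarrow> complex^'n^'n \<Rightarrow> nat \<Rightarrow> (nat \<Rightarrow> nat) \<Rightarrow> real \<Rightarrow> complex^'n^'n" where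
  "CDx V H A j a t = foldl (\<lambda>B k. Tk V H k (a k) t B) A [1..<j+1]"

lemma CDx_0: "CDx V H A 0 a t = A" by (simp add: CDx_def)

lemma CDx_Suc: "CDx V H A (Suc j) a t = Tk V H (Suc j) (a (Suc j)) t (CDx V H A j a t)"
  by (simp add: CDx_def)

lemma CDx_cong: "(\<forall>k\<in>{1..j}. a k = b k) \<Longrightarrow> CDx V H A j a t = CDx V H A j b t"
  by (induction j) (auto simp: CDx_0 CDx_Suc)

lemma comp_derivs_CDx: "comp_derivs K V H a \<phi> A = CDx V H A K a \<phi>"
  unfolding comp_derivs_def CDx_def Utilde_deriv_Tk ..

lemma finite_MI: "finite (multi_indices j p)"
proof (rule finite_subset)
  show "multi_indices j p \<subseteq> {f. \<forall>x. (x \<in> {1..j} \<longrightarrow> f x \<in> {0..p}) \<and> (x \<notin> {1..j} \<longrightarrow> f x = 0)}"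
  proof (clarsimp simp: multi_indices_def)
    fix a :: "nat \<Rightarrow> nat" and x assume "\<forall>k. (Suc 0 \<le> k \<longrightarrow> \<not> k \<le> j) \<longrightarrow> a k = 0" "Suc 0 \<le> x" "x \<le> j"
    then show "a x \<le> sum a {Suc 0..j}" using member_le_sum[of x "{1..j}" a] by simp
  qed
  show "finite {f. \<forall>x. (x \<in> {1..j} \<longrightarrow> f x \<in> {0..p}) \<and> (x \<notin> {1..j} \<longrightarrow> f x = (0::nat))}"
    by (rule finite_set_of_finite_funs) auto
qed

lemma MI_0: "multi_indices 0 p = (if p = 0 then {\<lambda>_. 0} else {})"
  by (auto simp: multi_indices_def)

lemma MI_Suc_fwd:
  assumes "i \<le> p" "a \<in> multi_indices j (p - i)"
  shows "a(Suc j := i) \<in> multi_indices (Suc j) p" "a (Suc j) = 0"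
proof -
  have a0: "\<forall>k. k \<notin> {1..j} \<longrightarrow> a k = 0" and as: "(\<Sum>k=1..j. a k) = p - i"
    using assms by (auto simp: multi_indices_def)
  show "a (Suc j) = 0" using a0 by auto
  have sumeq: "(\<Sum>k=1..j. (a(Suc j := i)) k) = (\<Sum>k=1..j. a k)" by (intro sum.cong) auto
  show "a(Suc j := i) \<in> multi_indices (Suc j) p"
    using a0 as assms(1) sumeq by (auto simp: multi_indices_def)
qed

lemma MI_Suc_bwd:
  assumes b: "b \<in> multi_indices (Suc j) p"
  shows "b (Suc j) \<le> p" "b(Suc j := 0) \<in> multi_indices j (p - b (Suc j))"
proof -
  have b0: "\<forall>k. k \<notin> {1..Suc j} \<longrightarrow> b k = 0" and bs: "(\<Sum>k=1..Suc j. b k) = p"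
    using b by (auto simp: multi_indices_def)
  have bs': "(\<Sum>k=1..j. b k) + b (Suc j) = p" using bs by simp
  then show "b (Suc j) \<le> p" by simp
  have sumeq: "(\<Sum>k=1..j. (b(Suc j := 0)) k) = (\<Sum>k=1..j. b k)" by (intro sum.cong) auto
  show "b(Suc j := 0) \<in> multi_indices j (p - b (Suc j))"
    using b0 bs' sumeq by (auto simp: multi_indices_def)
qed

lemma multinom_Suc:
  assumes ip: "i \<le> p"
  shows "multinom (Suc j) p (a(Suc j := i)) = real (p choose i) * multinom j (p - i) a"
proof -
  have pr: "(\<Prod>k=1..Suc j. fact ((a(Suc j := i)) k) :: real) = (\<Prod>k=1..j. fact (a k)) * fact i"
  proof -
    have "(\<Prod>k=1..Suc j. fact ((a(Suc j := i)) k) :: real) = (\<Prod>k=1..j. fact ((a(Suc j := i)) k)) * fact i"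
      by simp
    also have "(\<Prod>k=1..j. fact ((a(Suc j := i)) k) :: real) = (\<Prod>k=1..j. fact (a k))" by (intro prod.cong) auto
    finally show ?thesis .
  qed
  show ?thesis unfolding multinom_def pr binomial_fact[OF ip] by (simp add: field_simps)
qed

lemma Sx_formula: "Sx V H A j p t = (\<Sum>a\<in>multi_indices j p. multinom j p a *\<^sub>R CDx V H A j a t)"
proof (induction j arbitrary: p)
  case 0
  then show ?case by (simp add: MI_0 multinom_def CDx_0)
next
  case (Suc j)
  have lin: "Tk V H (Suc j) i t (\<Sum>a\<in>M. r a *\<^sub>R C a) = (\<Sum>a\<in>M. r a *\<^sub>R Tk V H (Suc j) i t (C a))" for i M r C
    by (simp add: linear_sum[OF bounded_linear.linear[OF bl_Tk]] linear_scale[OF bounded_linear.linear[OF bl_Tk]])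
  have "Sx V H A (Suc j) p t = (\<Sum>i\<le>p. \<Sum>a\<in>multi_indices j (p - i).
        (real (p choose i) * multinom j (p - i) a) *\<^sub>R Tk V H (Suc j) i t (CDx V H A j a t))"
    by (simp add: Suc.IH lin scaleR_sum_right)
  also have "\<dots> = (\<Sum>(i, a)\<in>Sigma {..p} (\<lambda>i. multi_indices j (p - i)).
        (real (p choose i) * multinom j (p - i) a) *\<^sub>R Tk V H (Suc j) i t (CDx V H A j a t))"
    by (rule sum.Sigma) (auto simp: finite_MI)
  also have "\<dots> = (\<Sum>b\<in>multi_indices (Suc j) p. multinom (Suc j) p b *\<^sub>R CDx V H A (Suc j) b t)"
  proof (rule sum.reindex_bij_witness[where j = "\<lambda>(i, a). a(Suc j := i)" and i = "\<lambda>b. (b (Suc j), b(Suc j := 0))"])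
    fix ia assume ia: "ia \<in> Sigma {..p} (\<lambda>i. multi_indices j (p - i))"
    obtain i a where iaeq: "ia = (i, a)" by force
    have ip: "i \<le> p" and am: "a \<in> multi_indices j (p - i)" using ia by (auto simp: iaeq)
    have aS: "a (Suc j) = 0" by (rule MI_Suc_fwd(2)[OF ip am])
    show "(case ia of (i, a) \<Rightarrow> a(Suc j := i)) \<in> multi_indices (Suc j) p"
      using MI_Suc_fwd(1)[OF ip am] by (simp add: iaeq)
    show "(\<lambda>b. (b (Suc j), b(Suc j := 0))) (case ia of (i, a) \<Rightarrow> a(Suc j := i)) = ia"
      using aS by (auto simp: iaeq fun_eq_iff)
    have cd: "CDx V H A j (a(Suc j := i)) t = CDx V H A j a t" by (rule CDx_cong) auto
    show "multinom (Suc j) p (case ia of (i, a) \<Rightarrow> a(Suc j := i)) *\<^sub>R CDx V H A (Suc j) (case ia of (i, a) \<Rightarrow> a(Suc j := i)) t =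
          (case ia of (i, a) \<Rightarrow> (real (p choose i) * multinom j (p - i) a) *\<^sub>R Tk V H (Suc j) i t (CDx V H A j a t))"
      by (simp add: iaeq CDx_Suc cd multinom_Suc[OF ip])
  next
    fix b assume b: "b \<in> multi_indices (Suc j) p"
    show "(case (b (Suc j), b(Suc j := 0)) of (i, a) \<Rightarrow> a(Suc j := i)) = b" by auto
    show "(b (Suc j), b(Suc j := 0)) \<in> Sigma {..p} (\<lambda>i. multi_indices j (p - i))"
      using MI_Suc_bwd[OF b] by auto
  qed
  finally show ?case .
qed



theorem lemma6:
  fixes K :: nat and H V :: "nat \<Rightarrow> complex^'n::finite^'n"
  assumes herm: "\<forall>k\<in>{1..K}. hermitian (H k)"
      and unit: "\<forall>k\<in>{1..K}. unitary (V k)"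
  shows "\<forall>(p::nat) (\<phi>::real) (A::complex^'n^'n).
           nth_deriv p (\<lambda>\<theta>. Echan K V H \<theta> A) \<phi>
             = (\<Sum>a\<in>multi_indices K p. multinom K p a *\<^sub>R comp_derivs K V H a \<phi> A)
         \<and> opnorm (nth_deriv p (\<lambda>\<theta>. Echan K V H \<theta> A) \<phi>)
             \<le> (\<Sum>k=1..K. 2 * omega_max (H k)) ^ p * opnorm A"
proof (intro allI)
  fix p :: nat and \<phi> :: real and A :: "complex^'n^'n"
  have e: "(\<lambda>\<theta>. Echan K V H \<theta> A) = (\<lambda>\<theta>. Sx V H A K 0 \<theta>)"
    using Echan_G[OF herm] by (simp add: fun_eq_iff Sx0)
  have d: "nth_deriv p (\<lambda>\<theta>. Echan K V H \<theta> A) \<phi> = Sx V H A K p \<phi>"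
    unfolding e nth_deriv_Sx ..
  show "nth_deriv p (\<lambda>\<theta>. Echan K V H \<theta> A) \<phi>
             = (\<Sum>a\<in>multi_indices K p. multinom K p a *\<^sub>R comp_derivs K V H a \<phi> A)
         \<and> opnorm (nth_deriv p (\<lambda>\<theta>. Echan K V H \<theta> A) \<phi>)
             \<le> (\<Sum>k=1..K. 2 * omega_max (H k)) ^ p * opnorm A"
    unfolding d comp_derivs_CDx using Sx_formula Sx_bound[OF herm unit] by blast
qed


end
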